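(* Let $v$ be a normalized, non-negative, monotone submodular valuation, and run the mechanism BFM-SWM described in the context with $\ell=1$, $\alpha=1+\frac{\sqrt{6}}{2}$, $\beta=3$ and any $\epsilon>0$, with all sellers behaving truthfully. Then the output $S^*$ satisfies $$v(S^* )-c(S^* )\ \ge\ 0.0877\cdot v(O)-c(O)-\epsilon/3,$$ where $O$ is an optimal solution of $\max\{v(S)-c(S): S\subseteq\mathcal{N},\ c(S)\le B\}$.
   Context: Setting. $\mathcal{N}$ is a finite set of $n$ sellers. The valuation $v:2^{\mathcal{N}}\to\mathbb{R}_{\ge 0}$ satisfies $v(\emptyset)=0$ and is submodular (for $X\subseteq Y\subseteq\mathcal{N}$ and $u\notin Y$, $v(u\mid Y)\le v(u\mid X)$), where $v(S\mid T)=v(S\cup T)-v(T)$, $v(u\mid T)=v(\{u\}\mid T)$; monotone means $v(X)\le v(Y)$ for $X\subseteq Y$. Each seller $u$ has a private cost $c(u)\ge 0$; $c(X)=\sum_{u\in X}c(u)$, $p(X)=\sum_{u\in X}p(u)$. $B>0$ is the budget, $[\ell]=\{1,\dots,\ell\}$. Sellers behave truthfully: a seller $u$ offered price $q$ accepts iff $c(u)\le q$. Mechanism BFM-SWM (inputs $B$, $\alpha>1$, $\beta>1$, $\epsilon>0$, $\ell\in\{1,2\}$): 1. Offer every seller the price $B$; let $R$ be the set of sellers who accept, and set $p(u)=B$ for $u\in R$. 2. Set $t=0$, $\rho_0=\epsilon/\alpha$, $u^*=\emptyset$ ($u^*$ is a set of at most one seller), and $S_{i,0}=\emptyset$ for $i\in[\ell]$.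 3. Repeat rounds: set $t\leftarrow t+1$, $\rho_t=\alpha\rho_{t-1}$, $S_{i,t}=\emptyset$ for all $i\in[\ell]$. Process the sellers $u\in R\setminus(\bigcup_{i=1}^{\ell}S_{i,t-1}\cup u^* )$ one at a time in a fixed order. For each such $u$: pick $j\in\arg\max_{i\in[\ell]}v(u\mid S_{i,t})$ (current contents); update $p(u)\leftarrow\min\{p(u),\ v(u\mid S_{j,t})/(\beta+\rho_t/B)\}$ and offer $p(u)$ to $u$. If $u$ accepts: if $v(S_{j,t}\cup\{u\})-p(S_{j,t}\cup\{u\})>\rho_t$ (current prices), set $u^*\leftarrow\{u\}$ and end the round immediately; otherwise add $u$ to $S_{j,t}$. If $u$ rejects, remove $u$ from $R$. After the round, stop if $R\setminus\left(\bigcup_{i=1}^{\ell}(S_{i,t-1}\cup S_{i,t})\cup u^*\right)=\emptyset$; otherwise start another round. 4. Let $M$ be the final value of $t$. Output $S^*\in\arg\max_{A\in\{S_{i,t}: i\in[\ell],\ t\in\{M-1,M\}\}\cup\{u^*\}}\big(v(A)-p(A)\big)$, paying each $u\in S^*$ its current price $p(u)$. *)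

theory Defs
  imports Complex_Main
begin

text \<open>Mechanism BFM-SWM. Sellers are of type 'a; the fixed processing order is a
  distinct list ord with set ord = N. Sets S_{i,t} are indexed by i in {1..l}.\<close>

definition marg :: "('a set \<Rightarrow> real) \<Rightarrow> 'a \<Rightarrow> 'a set \<Rightarrow> real" where
  "marg v u T = v (insert u T) - v T"

definition submodular_on :: "'a set \<Rightarrow> ('a set \<Rightarrow> real) \<Rightarrow> bool" where
  "submodular_on N v \<longleftrightarrow> (\<forall>X Y u. X \<subseteq> Y \<and> Y \<subseteq> N \<and> u \<in> N \<and> u \<notin> Y \<longrightarrow> marg v u Y \<le> marg v u X)"

definition monotone_on_sets :: "'a set \<Rightarrow> ('a set \<Rightarrow> real) \<Rightarrow> bool" where
  "monotone_on_sets N v \<longleftrightarrow> (\<forall>X Y. X \<subseteq> Y \<and> Y \<subseteq> N \<longrightarrow> v X \<le> v Y)"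

text \<open>State inside a round: R, prices p, the sets S_{i,t} (current round), u*, and a flag
  telling whether the round has ended early.\<close>
record 'a rst =
  Rs :: "'a set"
  pr :: "'a \<Rightarrow> real"
  Sc :: "nat \<Rightarrow> 'a set"
  ustar :: "'a set"
  stp :: bool

definition best_idx :: "('a set \<Rightarrow> real) \<Rightarrow> nat \<Rightarrow> (nat \<Rightarrow> 'a set) \<Rightarrow> 'a \<Rightarrow> nat" where
  "best_idx v l S u = (LEAST j. j \<in> {1..l} \<and> (\<forall>i\<in>{1..l}. marg v u (S i) \<le> marg v u (S j)))"

definition proc_one :: "('a set \<Rightarrow> real) \<Rightarrow> ('a \<Rightarrow> real) \<Rightarrow> real \<Rightarrow> real \<Rightarrow> real \<Rightarrow> nat
    \<Rightarrow> 'a \<Rightarrow> 'a rst \<Rightarrow> 'a rst" where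
  "proc_one v c B \<beta> \<rho> l u s =
    (let j = best_idx v l (Sc s) u;
         q = min (pr s u) (marg v u (Sc s j) / (\<beta> + \<rho> / B));
         p' = (pr s)(u := q)
     in if c u \<le> q then
          (if v (insert u (Sc s j)) - sum p' (insert u (Sc s j)) > \<rho>
           then s\<lparr>pr := p', ustar := {u}, stp := True\<rparr>
           else s\<lparr>pr := p', Sc := (Sc s)(j := insert u (Sc s j))\<rparr>)
        else s\<lparr>Rs := Rs s - {u}, pr := p'\<rparr>)"

fun proc_seq :: "('a set \<Rightarrow> real) \<Rightarrow> ('a \<Rightarrow> real) \<Rightarrow> real \<Rightarrow> real \<Rightarrow> real \<Rightarrow> nat
    \<Rightarrow> 'a list \<Rightarrow> 'a rst \<Rightarrow> 'a rst" where
  "proc_seq v c B \<beta> \<rho> l [] s = s"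
| "proc_seq v c B \<beta> \<rho> l (u # us) s =
     proc_seq v c B \<beta> \<rho> l us (if stp s then s else proc_one v c B \<beta> \<rho> l u s)"

text \<open>Global state after round t: R, prices, S_{.,t-1}, S_{.,t}, u*.\<close>
record 'a gst =
  gR :: "'a set"
  gp :: "'a \<Rightarrow> real"
  gprev :: "nat \<Rightarrow> 'a set"
  gcur :: "nat \<Rightarrow> 'a set"
  gu :: "'a set"

definition bfm_round :: "('a set \<Rightarrow> real) \<Rightarrow> ('a \<Rightarrow> real) \<Rightarrow> real \<Rightarrow> real \<Rightarrow> real \<Rightarrow> nat
    \<Rightarrow> 'a list \<Rightarrow> 'a gst \<Rightarrow> 'a gst" where
  "bfm_round v c B \<beta> \<rho> l ord g =
    (let todo = filter (\<lambda>u. u \<in> gR g \<and> u \<notin> (\<Union>i\<in>{1..l}. gcur g i) \<and> u \<notin> gu g) ord;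
         s = proc_seq v c B \<beta> \<rho> l todo
               \<lparr>Rs = gR g, pr = gp g, Sc = (\<lambda>_. {}), ustar = gu g, stp = False\<rparr>
     in \<lparr>gR = Rs s, gp = pr s, gprev = gcur g, gcur = Sc s, gu = ustar s\<rparr>)"

text \<open>State after t rounds; round t+1 uses rho_{t+1} = (eps/alpha) * alpha^(t+1) = eps * alpha^t.\<close>
primrec bfm_iter :: "('a set \<Rightarrow> real) \<Rightarrow> ('a \<Rightarrow> real) \<Rightarrow> real \<Rightarrow> real \<Rightarrow> real \<Rightarrow> real \<Rightarrow> nat
    \<Rightarrow> 'a list \<Rightarrow> nat \<Rightarrow> 'a gst" where
  "bfm_iter v c B \<alpha> \<beta> \<epsilon> l ord 0 =
     \<lparr>gR = {u \<in> set ord. c u \<le> B}, gp = (\<lambda>_. B), gprev = (\<lambda>_. {}), gcur = (\<lambda>_. {}), gu = {}\<rparr>"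
| "bfm_iter v c B \<alpha> \<beta> \<epsilon> l ord (Suc t) =
     bfm_round v c B \<beta> (\<epsilon> * \<alpha> ^ t) l ord (bfm_iter v c B \<alpha> \<beta> \<epsilon> l ord t)"

definition bfm_stop :: "nat \<Rightarrow> 'a gst \<Rightarrow> bool" where
  "bfm_stop l g \<longleftrightarrow> gR g - ((\<Union>i\<in>{1..l}. gprev g i \<union> gcur g i) \<union> gu g) = {}"

definition bfm_M :: "('a set \<Rightarrow> real) \<Rightarrow> ('a \<Rightarrow> real) \<Rightarrow> real \<Rightarrow> real \<Rightarrow> real \<Rightarrow> real \<Rightarrow> nat
    \<Rightarrow> 'a list \<Rightarrow> nat" where
  "bfm_M v c B \<alpha> \<beta> \<epsilon> l ord = (LEAST t. 0 < t \<and> bfm_stop l (bfm_iter v c B \<alpha> \<beta> \<epsilon> l ord t))"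

definition bfm_final :: "('a set \<Rightarrow> real) \<Rightarrow> ('a \<Rightarrow> real) \<Rightarrow> real \<Rightarrow> real \<Rightarrow> real \<Rightarrow> real \<Rightarrow> nat
    \<Rightarrow> 'a list \<Rightarrow> 'a gst" where
  "bfm_final v c B \<alpha> \<beta> \<epsilon> l ord = bfm_iter v c B \<alpha> \<beta> \<epsilon> l ord (bfm_M v c B \<alpha> \<beta> \<epsilon> l ord)"

definition bfm_candidates :: "nat \<Rightarrow> 'a gst \<Rightarrow> 'a set set" where
  "bfm_candidates l g = gprev g ` {1..l} \<union> gcur g ` {1..l} \<union> {gu g}"

definition bfm_outputs :: "('a set \<Rightarrow> real) \<Rightarrow> ('a \<Rightarrow> real) \<Rightarrow> real \<Rightarrow> real \<Rightarrow> real \<Rightarrow> real \<Rightarrow> nat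
    \<Rightarrow> 'a list \<Rightarrow> 'a set set" where
  "bfm_outputs v c B \<alpha> \<beta> \<epsilon> l ord =
    (let g = bfm_final v c B \<alpha> \<beta> \<epsilon> l ord; C = bfm_candidates l g
     in {A \<in> C. \<forall>A'\<in>C. v A' - sum (gp g) A' \<le> v A - sum (gp g) A})"

end

theory Submission imports Defs begin

lemma best_idx_1: "best_idx v 1 S u = 1"
  unfolding best_idx_def by (rule Least_equality) auto

lemma proc_one_eq: "proc_one v c B \<beta> \<rho> 1 u s =
   (let q = min (pr s u) (marg v u (Sc s 1) / (\<beta> + \<rho> / B)); p' = (pr s)(u := q)
    in if c u \<le> q then
          (if v (insert u (Sc s 1)) - sum p' (insert u (Sc s 1)) > \<rho>
           then s\<lparr>pr := p', ustar := {u}, stp := True\<rparr>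
           else s\<lparr>pr := p', Sc := (Sc s)(1 := insert u (Sc s 1))\<rparr>)
        else s\<lparr>Rs := Rs s - {u}, pr := p'\<rparr>)"
  unfolding proc_one_def best_idx_1 Let_def by (rule refl)

lemma proc_seq_stp: "stp s \<Longrightarrow> proc_seq v c B \<beta> \<rho> l xs s = s"
  by (induction xs) auto

lemma proc_seq_stp_mono: "stp s \<Longrightarrow> stp (proc_seq v c B \<beta> \<rho> l xs s)"
  by (simp add: proc_seq_stp)

locale bfm =
  fixes v :: "'a set \<Rightarrow> real" and c :: "'a \<Rightarrow> real" and N :: "'a set" and B :: real
  assumes fin: "finite N" and v0: "v {} = 0" and vnn: "\<forall>X\<subseteq>N. 0 \<le> v X"
    and mono: "monotone_on_sets N v" and sub: "submodular_on N v"
    and cnn: "\<forall>u\<in>N. 0 \<le> c u" and Bpos: "B > 0"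
begin

lemma monoD: "X \<subseteq> Y \<Longrightarrow> Y \<subseteq> N \<Longrightarrow> v X \<le> v Y"
  using mono unfolding monotone_on_sets_def by blast

lemma vnnD: "X \<subseteq> N \<Longrightarrow> 0 \<le> v X" using vnn by blast

lemma marg_nn: "u \<in> N \<Longrightarrow> S \<subseteq> N \<Longrightarrow> 0 \<le> marg v u S"
  unfolding marg_def using monoD[of S "insert u S"] by auto

lemma subD: "X \<subseteq> Y \<Longrightarrow> Y \<subseteq> N \<Longrightarrow> u \<in> N \<Longrightarrow> u \<notin> Y \<Longrightarrow> marg v u Y \<le> marg v u X"
  using sub unfolding submodular_on_def by blast

lemma marg_le_single: assumes "u \<in> N" "S \<subseteq> N" shows "marg v u S \<le> v {u}"
proof (cases "u \<in> S")
  case True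
  then show ?thesis using vnnD[of "{u}"] assms by (simp add: marg_def insert_absorb)
next
  case False
  then have "marg v u S \<le> marg v u {}" using subD[of "{}" S u] False assms by auto
  then show ?thesis by (simp add: marg_def v0)
qed

lemma diminishing:
  assumes "finite F" "F \<subseteq> N" "T \<subseteq> N"
  shows "v (T \<union> F) \<le> v T + (\<Sum>f\<in>F - T. marg v f T)"
  using assms
proof (induction F rule: finite_induct)
  case empty then show ?case by simp
next
  case (insert x F)
  show ?case
  proof (cases "x \<in> T")
    case True
    then have "T \<union> insert x F = T \<union> F" "insert x F - T = F - T" by auto
    then show ?thesis using insert by simp
  next
    case False
    have "v (T \<union> insert x F) = v (T \<union> F) + marg v x (T \<union> F)"
      by (simp add: marg_def)
    also have "marg v x (T \<union> F) \<le> marg v x T"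
      using subD[of T "T \<union> F" x] insert False by auto
    finally have "v (T \<union> insert x F) \<le> v (T \<union> F) + marg v x T" by simp
    moreover have "insert x F - T = insert x (F - T)" using False by auto
    moreover have "finite (F - T)" "x \<notin> F - T" using insert by auto
    ultimately show ?thesis using insert by simp
  qed
qed

lemma lattice:
  assumes "finite F" "F \<subseteq> N" "X \<subseteq> Y" "Y \<subseteq> N" "F \<inter> Y = {}"
  shows "v (Y \<union> F) - v Y \<le> v (X \<union> F) - v X"
  using assms
proof (induction F rule: finite_induct)
  case empty then show ?case by simp
next
  case (insert x F)
  have "v (Y \<union> insert x F) = v (Y \<union> F) + marg v x (Y \<union> F)"
       "v (X \<union> insert x F) = v (X \<union> F) + marg v x (X \<union> F)"
    by (simp_all add: marg_def)
  moreover have "marg v x (Y \<union> F) \<le> marg v x (X \<union> F)"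
    using subD[of "X \<union> F" "Y \<union> F" x] insert by auto
  ultimately show ?case using insert by simp
qed

lemma subadd: "A \<subseteq> N \<Longrightarrow> C \<subseteq> N \<Longrightarrow> v (A \<union> C) \<le> v A + v C"
proof -
  assume a: "A \<subseteq> N" "C \<subseteq> N"
  have f: "finite (C - A)" using a fin finite_subset by blast
  have "v (A \<union> (C - A)) - v A \<le> v ({} \<union> (C - A)) - v {}"
    using lattice[OF f, of "{}" A] a by auto
  moreover have "v (C - A) \<le> v C" using monoD a by auto
  moreover have "A \<union> (C - A) = A \<union> C" by auto
  ultimately show ?thesis using v0 by simp
qed

lemma subadd_UN: "finite K \<Longrightarrow> (\<forall>k\<in>K. A k \<subseteq> N) \<Longrightarrow> v (\<Union>k\<in>K. A k) \<le> (\<Sum>k\<in>K. v (A k))"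
proof (induction K rule: finite_induct)
  case empty then show ?case using v0 by simp
next
  case (insert x F)
  have "v (\<Union>k\<in>insert x F. A k) = v (A x \<union> (\<Union>k\<in>F. A k))" by simp
  also have "\<dots> \<le> v (A x) + v (\<Union>k\<in>F. A k)" using subadd[of "A x" "\<Union>k\<in>F. A k"] insert by auto
  finally show ?case using insert by simp
qed

definition inv_s :: "real \<Rightarrow> 'a rst \<Rightarrow> bool" where
 "inv_s \<rho> s \<longleftrightarrow> Rs s \<subseteq> N \<and> (\<forall>u\<in>Rs s. c u \<le> pr s u) \<and> (\<forall>u. 0 \<le> pr s u) \<and> Sc s 1 \<subseteq> Rs s
   \<and> sum (pr s) (Sc s 1) \<le> v (Sc s 1) / 3 \<and> v (Sc s 1) - sum (pr s) (Sc s 1) \<le> \<rho>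
   \<and> (stp s \<longrightarrow> (\<exists>w. ustar s = {w} \<and> w \<in> Rs s \<and> w \<notin> Sc s 1
        \<and> \<rho> < v (Sc s 1) - sum (pr s) (Sc s 1) + (v {w} - pr s w) \<and> pr s w \<le> v {w} / 3))"

lemma step:
  assumes inv: "inv_s \<rho> s" and ns: "\<not> stp s" and uR: "u \<in> Rs s" and uS: "u \<notin> Sc s 1"
    and rho: "\<rho> > 0"
  defines "s1 \<equiv> proc_one v c B 3 \<rho> 1 u s"
  shows "inv_s \<rho> s1 \<and> (\<forall>x. x \<noteq> u \<longrightarrow> pr s1 x = pr s x) \<and> Rs s1 \<subseteq> Rs s \<and> Rs s - Rs s1 \<subseteq> {u}
    \<and> Sc s 1 \<subseteq> Sc s1 1 \<and> Sc s1 1 \<subseteq> insert u (Sc s 1)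
    \<and> (\<not> stp s1 \<longrightarrow> (u \<in> Rs s1 \<longrightarrow> u \<in> Sc s1 1) \<and> ustar s1 = ustar s)
    \<and> (u \<notin> Rs s1 \<longrightarrow> u \<notin> Sc s1 1 \<and> marg v u (Sc s1 1) \<le> c u * (3 + \<rho> / B))"
proof -
  define S where "S = Sc s 1"
  define m where "m = marg v u S"
  define d where "d = 3 + \<rho> / B"
  define q where "q = min (pr s u) (m / d)"
  define p' where "p' = (pr s)(u := q)"
  have RN: "Rs s \<subseteq> N" and cp: "\<forall>x\<in>Rs s. c x \<le> pr s x" and pnn: "\<forall>x. 0 \<le> pr s x"
    and SR: "S \<subseteq> Rs s" and Sp: "sum (pr s) S \<le> v S / 3" and Srho: "v S - sum (pr s) S \<le> \<rho>"
    using inv unfolding inv_s_def S_def by auto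
  have uN: "u \<in> N" using uR RN by auto
  have SN: "S \<subseteq> N" using SR RN by auto
  have finS: "finite S" using SN fin finite_subset by blast
  have uS': "u \<notin> S" using uS S_def by simp
  have d3: "d \<ge> 3" unfolding d_def using rho Bpos by simp
  have m0: "0 \<le> m" unfolding m_def using marg_nn uN SN by simp
  have m1: "m \<le> v {u}" unfolding m_def using marg_le_single uN SN by simp
  have q0: "0 \<le> q" unfolding q_def using pnn m0 d3 by simp
  have mdm: "m / d \<le> m / 3" by (rule divide_left_mono) (use m0 d3 in auto)
  have q3: "q \<le> m / 3" using mdm min.cobounded2[of "pr s u" "m/d"] unfolding q_def by linarith
  have sumS: "sum p' S = sum (pr s) S" unfolding p'_def using uS' by (intro sum.cong) auto
  have sumI: "sum p' (insert u S) = q + sum (pr s) S" using finS uS' sumS by (simp add: p'_def)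
  have vI: "v (insert u S) = v S + m" unfolding m_def marg_def by simp
  have p'nn: "\<forall>x. 0 \<le> p' x" using pnn q0 unfolding p'_def by simp
  have s1eq: "s1 = (if c u \<le> q then
          (if v (insert u S) - sum p' (insert u S) > \<rho>
           then s\<lparr>pr := p', ustar := {u}, stp := True\<rparr>
           else s\<lparr>pr := p', Sc := (Sc s)(1 := insert u S)\<rparr>)
        else s\<lparr>Rs := Rs s - {u}, pr := p'\<rparr>)"
    unfolding s1_def proc_one_eq S_def q_def p'_def m_def d_def Let_def by simp
  show ?thesis
  proof (cases "c u \<le> q")
    case False
    then have s1: "s1 = s\<lparr>Rs := Rs s - {u}, pr := p'\<rparr>" using s1eq by simp
    have "q \<noteq> pr s u" using False cp uR by force
    then have "q = m / d" unfolding q_def by (simp add: min_def split: if_splits)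
    then have "m / d < c u" using False by simp
    then have "m < c u * d" using d3 by (simp add: divide_less_eq)
    then have mc: "m \<le> c u * (3 + \<rho> / B)" unfolding d_def by simp
    have "inv_s \<rho> s1" unfolding inv_s_def s1 using RN cp p'nn SR Sp Srho sumS uS' ns
      by (auto simp: S_def p'_def)
    then show ?thesis using mc uS' by (auto simp: s1 p'_def S_def m_def)
  next
    case True
    note acc = True
    show ?thesis
    proof (cases "v (insert u S) - sum p' (insert u S) > \<rho>")
      case True
      then have s1: "s1 = s\<lparr>pr := p', ustar := {u}, stp := True\<rparr>" using s1eq acc by simp
      have "\<rho> < v S - sum (pr s) S + (v {u} - q)" using True sumI vI m1 by simp
      moreover have "p' u = q" by (simp add: p'_def)
      moreover have "q \<le> v {u} / 3" using q3 m1 by simp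
      ultimately have "inv_s \<rho> s1" unfolding inv_s_def s1 using RN cp p'nn SR Sp Srho sumS uS' acc uR
        by (auto simp: S_def p'_def)
      then show ?thesis using uR by (auto simp: s1 p'_def S_def)
    next
      case False
      then have s1: "s1 = s\<lparr>pr := p', Sc := (Sc s)(1 := insert u S)\<rparr>" using s1eq acc by simp
      have "sum p' (insert u S) \<le> v (insert u S) / 3" using sumI vI q3 Sp by simp
      moreover have "v (insert u S) - sum p' (insert u S) \<le> \<rho>" using False by simp
      ultimately have "inv_s \<rho> s1" unfolding inv_s_def s1 using RN cp p'nn SR Sp Srho sumS uS' acc uR ns
        by (auto simp: S_def p'_def)
      then show ?thesis using ns uR by (auto simp: s1 p'_def S_def)
    qed
  qed
qed

lemma seq:
  assumes "inv_s \<rho> s" "distinct xs" "set xs \<subseteq> Rs s" "set xs \<inter> Sc s 1 = {}" "\<rho> > 0"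
  shows "let s' = proc_seq v c B 3 \<rho> 1 xs s in
    inv_s \<rho> s' \<and> (\<forall>x. x \<notin> set xs \<longrightarrow> pr s' x = pr s x) \<and> Rs s' \<subseteq> Rs s \<and> Rs s - Rs s' \<subseteq> set xs
    \<and> Sc s 1 \<subseteq> Sc s' 1 \<and> Sc s' 1 \<subseteq> Sc s 1 \<union> set xs
    \<and> (\<not> stp s' \<longrightarrow> set xs \<inter> Rs s' \<subseteq> Sc s' 1 \<and> ustar s' = ustar s)
    \<and> (\<forall>u\<in>Rs s - Rs s'. u \<notin> Sc s' 1 \<and> marg v u (Sc s' 1) \<le> c u * (3 + \<rho> / B))"
  using assms
proof (induction xs arbitrary: s)
  case Nil then show ?case by simp
next
  case (Cons u xs)
  show ?case
  proof (cases "stp s")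
    case True
    have "proc_seq v c B 3 \<rho> 1 (u # xs) s = s" using proc_seq_stp[OF True] .
    then show ?thesis using Cons.prems(1) True by (simp add: Let_def subset_insertI2)
  next
    case False
    define s1 where "s1 = proc_one v c B 3 \<rho> 1 u s"
    have eq: "proc_seq v c B 3 \<rho> 1 (u # xs) s = proc_seq v c B 3 \<rho> 1 xs s1"
      using False by (simp add: s1_def)
    have uR: "u \<in> Rs s" "u \<notin> Sc s 1" using Cons.prems by auto
    have st: "inv_s \<rho> s1 \<and> (\<forall>x. x \<noteq> u \<longrightarrow> pr s1 x = pr s x) \<and> Rs s1 \<subseteq> Rs s \<and> Rs s - Rs s1 \<subseteq> {u}
    \<and> Sc s 1 \<subseteq> Sc s1 1 \<and> Sc s1 1 \<subseteq> insert u (Sc s 1)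
    \<and> (\<not> stp s1 \<longrightarrow> (u \<in> Rs s1 \<longrightarrow> u \<in> Sc s1 1) \<and> ustar s1 = ustar s)
    \<and> (u \<notin> Rs s1 \<longrightarrow> u \<notin> Sc s1 1 \<and> marg v u (Sc s1 1) \<le> c u * (3 + \<rho> / B))"
      using step[OF Cons.prems(1) False uR Cons.prems(5)] unfolding s1_def by blast
    from st have s1: "inv_s \<rho> s1" and s2: "\<forall>x. x \<noteq> u \<longrightarrow> pr s1 x = pr s x"
      and s3: "Rs s1 \<subseteq> Rs s" and s4: "Rs s - Rs s1 \<subseteq> {u}" and s5: "Sc s 1 \<subseteq> Sc s1 1"
      and s6: "Sc s1 1 \<subseteq> insert u (Sc s 1)"
      and s7: "\<not> stp s1 \<longrightarrow> (u \<in> Rs s1 \<longrightarrow> u \<in> Sc s1 1) \<and> ustar s1 = ustar s"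
      and s8: "u \<notin> Rs s1 \<longrightarrow> u \<notin> Sc s1 1 \<and> marg v u (Sc s1 1) \<le> c u * (3 + \<rho> / B)"
      by blast+
    have ux: "u \<notin> set xs" "distinct xs" using Cons.prems(2) by auto
    have xsR: "set xs \<subseteq> Rs s" "set xs \<inter> Sc s 1 = {}" using Cons.prems(3,4) by auto
    have p1: "set xs \<subseteq> Rs s1" using s4 xsR(1) ux(1) by blast
    have p2: "set xs \<inter> Sc s1 1 = {}" using s6 xsR(2) ux(1) by blast
    define s' where "s' = proc_seq v c B 3 \<rho> 1 xs s1"
    have IH: "inv_s \<rho> s' \<and> (\<forall>x. x \<notin> set xs \<longrightarrow> pr s' x = pr s1 x) \<and> Rs s' \<subseteq> Rs s1 \<and> Rs s1 - Rs s' \<subseteq> set xs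
    \<and> Sc s1 1 \<subseteq> Sc s' 1 \<and> Sc s' 1 \<subseteq> Sc s1 1 \<union> set xs
    \<and> (\<not> stp s' \<longrightarrow> set xs \<inter> Rs s' \<subseteq> Sc s' 1 \<and> ustar s' = ustar s1)
    \<and> (\<forall>u\<in>Rs s1 - Rs s'. u \<notin> Sc s' 1 \<and> marg v u (Sc s' 1) \<le> c u * (3 + \<rho> / B))"
      using Cons.IH[OF s1 ux(2) p1 p2 Cons.prems(5)] unfolding s'_def Let_def by blast
    from IH have i1: "inv_s \<rho> s'" and i2: "\<forall>x. x \<notin> set xs \<longrightarrow> pr s' x = pr s1 x"
      and i3: "Rs s' \<subseteq> Rs s1" and i4: "Rs s1 - Rs s' \<subseteq> set xs" and i5: "Sc s1 1 \<subseteq> Sc s' 1"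
      and i6: "Sc s' 1 \<subseteq> Sc s1 1 \<union> set xs"
      and i7: "\<not> stp s' \<longrightarrow> set xs \<inter> Rs s' \<subseteq> Sc s' 1 \<and> ustar s' = ustar s1"
      and i8: "\<forall>u\<in>Rs s1 - Rs s'. u \<notin> Sc s' 1 \<and> marg v u (Sc s' 1) \<le> c u * (3 + \<rho> / B)"
      by blast+
    have stp1: "\<not> stp s' \<Longrightarrow> \<not> stp s1" using proc_seq_stp_mono unfolding s'_def by blast
    have s'N: "Sc s' 1 \<subseteq> N" using i1 unfolding inv_s_def by blast
    have uN: "u \<in> N" using uR Cons.prems(1) unfolding inv_s_def by blast
    have rem: "u \<notin> Sc s' 1 \<and> marg v u (Sc s' 1) \<le> c u * (3 + \<rho> / B)" if "u \<notin> Rs s1"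
    proof -
      have a: "u \<notin> Sc s1 1" "marg v u (Sc s1 1) \<le> c u * (3 + \<rho> / B)" using s8 that by auto
      have b: "u \<notin> Sc s' 1" using a i6 ux(1) by blast
      have "marg v u (Sc s' 1) \<le> marg v u (Sc s1 1)" using subD[OF i5 s'N uN b] .
      then show ?thesis using a b by linarith
    qed
    show ?thesis unfolding eq Let_def s'_def[symmetric]
    proof (intro conjI)
      show "inv_s \<rho> s'" using i1 .
      show "\<forall>x. x \<notin> set (u # xs) \<longrightarrow> pr s' x = pr s x" using i2 s2 by simp
      show "Rs s' \<subseteq> Rs s" using i3 s3 by blast
      show "Rs s - Rs s' \<subseteq> set (u # xs)" using i4 s4 by auto
      show "Sc s 1 \<subseteq> Sc s' 1" using i5 s5 by blast
      show "Sc s' 1 \<subseteq> Sc s 1 \<union> set (u # xs)" using i6 s6 by auto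
      show "\<not> stp s' \<longrightarrow> set (u # xs) \<inter> Rs s' \<subseteq> Sc s' 1 \<and> ustar s' = ustar s"
      proof
        assume ns: "\<not> stp s'"
        then have n1: "\<not> stp s1" by (rule stp1)
        have "u \<in> Rs s' \<longrightarrow> u \<in> Sc s' 1" using s7 n1 i3 i5 by blast
        then show "set (u # xs) \<inter> Rs s' \<subseteq> Sc s' 1 \<and> ustar s' = ustar s"
          using i7 ns s7 n1 by auto
      qed
      show "\<forall>w\<in>Rs s - Rs s'. w \<notin> Sc s' 1 \<and> marg v w (Sc s' 1) \<le> c w * (3 + \<rho> / B)"
      proof
        fix w assume w: "w \<in> Rs s - Rs s'"
        show "w \<notin> Sc s' 1 \<and> marg v w (Sc s' 1) \<le> c w * (3 + \<rho> / B)"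
        proof (cases "w \<in> Rs s1")
          case True then show ?thesis using i8 w by blast
        next
          case False
          then have "w = u" using s4 w by auto
          then show ?thesis using rem False by blast
        qed
      qed
    qed
  qed
qed

definition inv_g :: "'a gst \<Rightarrow> bool" where
 "inv_g g \<longleftrightarrow> gR g \<subseteq> N \<and> (\<forall>u\<in>gR g. c u \<le> gp g u) \<and> (\<forall>u. 0 \<le> gp g u) \<and> gcur g 1 \<subseteq> gR g
   \<and> sum (gp g) (gcur g 1) \<le> v (gcur g 1) / 3 \<and> gprev g 1 \<subseteq> gR g
   \<and> sum (gp g) (gprev g 1) \<le> v (gprev g 1) / 3
   \<and> (gu g = {} \<or> (\<exists>w. gu g = {w} \<and> w \<in> gR g \<and> gp g w \<le> v {w} / 3))"

lemma round:
  assumes ig: "inv_g g" and rho: "\<rho> > 0" and dist: "distinct ord" and sN: "set ord = N"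
  defines "g' \<equiv> bfm_round v c B 3 \<rho> 1 ord g"
  shows "inv_g g'" and "gprev g' = gcur g" and "gR g' \<subseteq> gR g"
    and "\<forall>u\<in>gR g - gR g'. u \<notin> gcur g' 1 \<and> marg v u (gcur g' 1) \<le> c u * (3 + \<rho> / B)"
    and "v (gcur g' 1) - sum (gp g') (gcur g' 1) \<le> \<rho>"
    and "\<forall>u \<in> gcur g 1 \<union> gu g. gp g' u = gp g u"
    and "(gu g' = gu g \<and> bfm_stop 1 g') \<or>
         (\<exists>w. gu g' = {w} \<and> \<rho> < v (gcur g' 1) - sum (gp g') (gcur g' 1) + (v {w} - gp g' w))"
proof -
  define todo where "todo = filter (\<lambda>u. u \<in> gR g \<and> u \<notin> gcur g 1 \<and> u \<notin> gu g) ord"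
  define s0 :: "'a rst" where "s0 = \<lparr>Rs = gR g, pr = gp g, Sc = (\<lambda>_. {}), ustar = gu g, stp = False\<rparr>"
  define s where "s = proc_seq v c B 3 \<rho> 1 todo s0"
  have g'eq: "g' = \<lparr>gR = Rs s, gp = pr s, gprev = gcur g, gcur = Sc s, gu = ustar s\<rparr>"
    unfolding g'_def bfm_round_def s_def s0_def todo_def Let_def by simp
  have settodo: "set todo = {u \<in> N. u \<in> gR g \<and> u \<notin> gcur g 1 \<and> u \<notin> gu g}"
    unfolding todo_def using sN by auto
  have gRN: "gR g \<subseteq> N" and gcp: "\<forall>u\<in>gR g. c u \<le> gp g u" and gpnn: "\<forall>u. 0 \<le> gp g u"
    and gcR: "gcur g 1 \<subseteq> gR g" and gcs: "sum (gp g) (gcur g 1) \<le> v (gcur g 1) / 3"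
    and gpR: "gprev g 1 \<subseteq> gR g"
    and gu: "gu g = {} \<or> (\<exists>w. gu g = {w} \<and> w \<in> gR g \<and> gp g w \<le> v {w} / 3)"
    using ig unfolding inv_g_def by auto
  have i0: "inv_s \<rho> s0" unfolding inv_s_def s0_def using gRN gcp gpnn v0 rho by auto
  have d0: "distinct todo" unfolding todo_def using dist by simp
  have t0: "set todo \<subseteq> Rs s0" unfolding s0_def using settodo by auto
  have t1: "set todo \<inter> Sc s0 1 = {}" unfolding s0_def by simp
  have SQ: "inv_s \<rho> s \<and> (\<forall>x. x \<notin> set todo \<longrightarrow> pr s x = pr s0 x) \<and> Rs s \<subseteq> Rs s0 \<and> Rs s0 - Rs s \<subseteq> set todo
    \<and> Sc s0 1 \<subseteq> Sc s 1 \<and> Sc s 1 \<subseteq> Sc s0 1 \<union> set todo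
    \<and> (\<not> stp s \<longrightarrow> set todo \<inter> Rs s \<subseteq> Sc s 1 \<and> ustar s = ustar s0)
    \<and> (\<forall>u\<in>Rs s0 - Rs s. u \<notin> Sc s 1 \<and> marg v u (Sc s 1) \<le> c u * (3 + \<rho> / B))"
    using seq[OF i0 d0 t0 t1 rho] unfolding s_def Let_def by blast
  from SQ have q1: "inv_s \<rho> s" and q2: "\<forall>x. x \<notin> set todo \<longrightarrow> pr s x = gp g x"
    and q3: "Rs s \<subseteq> gR g" and q4: "gR g - Rs s \<subseteq> set todo"
    and q7: "\<not> stp s \<longrightarrow> set todo \<inter> Rs s \<subseteq> Sc s 1 \<and> ustar s = gu g"
    and q8: "\<forall>u\<in>gR g - Rs s. u \<notin> Sc s 1 \<and> marg v u (Sc s 1) \<le> c u * (3 + \<rho> / B)"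
    unfolding s0_def by simp_all
  from q1 have r1: "Rs s \<subseteq> N" and r2: "\<forall>u\<in>Rs s. c u \<le> pr s u" and r3: "\<forall>u. 0 \<le> pr s u"
    and r4: "Sc s 1 \<subseteq> Rs s" and r5: "sum (pr s) (Sc s 1) \<le> v (Sc s 1) / 3"
    and r6: "v (Sc s 1) - sum (pr s) (Sc s 1) \<le> \<rho>"
    and r7: "stp s \<longrightarrow> (\<exists>w. ustar s = {w} \<and> w \<in> Rs s \<and> w \<notin> Sc s 1
        \<and> \<rho> < v (Sc s 1) - sum (pr s) (Sc s 1) + (v {w} - pr s w) \<and> pr s w \<le> v {w} / 3)"
    unfolding inv_s_def by blast+
  have unch: "\<forall>u \<in> gcur g 1 \<union> gu g. pr s u = gp g u" using q2 settodo by auto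
  have keep: "(gcur g 1 \<union> gu g) \<inter> gR g \<subseteq> Rs s" using q4 settodo by auto
  have sumprev: "sum (pr s) (gcur g 1) = sum (gp g) (gcur g 1)" using unch by (intro sum.cong) auto
  show "inv_g g'"
  proof -
    have a: "gcur g 1 \<subseteq> Rs s" using keep gcR by auto
    have b: "gu g' = {} \<or> (\<exists>w. gu g' = {w} \<and> w \<in> gR g' \<and> gp g' w \<le> v {w} / 3)"
    proof (cases "stp s")
      case True then show ?thesis using r7 g'eq by auto
    next
      case False
      then have "ustar s = gu g" using q7 by blast
      then show ?thesis using gu keep unch g'eq by auto
    qed
    show ?thesis unfolding inv_g_def using b a r1 r2 r3 r4 r5 sumprev gcs by (simp add: g'eq)
  qed
  show "gprev g' = gcur g" by (simp add: g'eq)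
  show "gR g' \<subseteq> gR g" using q3 by (simp add: g'eq)
  show "\<forall>u\<in>gR g - gR g'. u \<notin> gcur g' 1 \<and> marg v u (gcur g' 1) \<le> c u * (3 + \<rho> / B)"
    using q8 by (simp add: g'eq)
  show "v (gcur g' 1) - sum (gp g') (gcur g' 1) \<le> \<rho>" using r6 by (simp add: g'eq)
  show "\<forall>u \<in> gcur g 1 \<union> gu g. gp g' u = gp g u" using unch by (simp add: g'eq)
  show "(gu g' = gu g \<and> bfm_stop 1 g') \<or>
         (\<exists>w. gu g' = {w} \<and> \<rho> < v (gcur g' 1) - sum (gp g') (gcur g' 1) + (v {w} - gp g' w))"
  proof (cases "stp s")
    case True then show ?thesis using r7 g'eq by auto
  next
    case False
    then have u: "ustar s = gu g" and cov: "set todo \<inter> Rs s \<subseteq> Sc s 1" using q7 by blast+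
    have "Rs s - (gcur g 1 \<union> Sc s 1 \<union> ustar s) = {}"
    proof -
      { fix x assume x: "x \<in> Rs s" "x \<notin> gcur g 1" "x \<notin> Sc s 1" "x \<notin> ustar s"
        then have "x \<in> gR g" "x \<in> N" using q3 r1 by auto
        then have "x \<in> set todo" using x u settodo by auto
        then have False using cov x by auto }
      then show ?thesis by blast
    qed
    then have "bfm_stop 1 g'" unfolding bfm_stop_def by (simp add: g'eq)
    then show ?thesis using u g'eq by simp
  qed
qed

lemma iter_inv:
  assumes a: "\<alpha> \<ge> 1" and e: "\<epsilon> > 0" and dist: "distinct ord" and sN: "set ord = N"
  shows "inv_g (bfm_iter v c B \<alpha> 3 \<epsilon> 1 ord t)"
proof (induction t)
  case 0
  show ?case unfolding inv_g_def using sN Bpos v0 by auto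
next
  case (Suc t)
  have "\<epsilon> * \<alpha> ^ t > 0" using a e by simp
  then show ?case using round(1)[OF Suc _ dist sN] by simp
qed

lemma iter_round:
  fixes t :: nat
  assumes a: "\<alpha> \<ge> 1" and e: "\<epsilon> > 0" and dist: "distinct ord" and sN: "set ord = N"
  defines "g \<equiv> bfm_iter v c B \<alpha> 3 \<epsilon> 1 ord t" and "g' \<equiv> bfm_iter v c B \<alpha> 3 \<epsilon> 1 ord (Suc t)"
    and "\<rho> \<equiv> \<epsilon> * \<alpha> ^ t"
  shows "gprev g' = gcur g" and "gR g' \<subseteq> gR g"
    and "\<forall>u\<in>gR g - gR g'. u \<notin> gcur g' 1 \<and> marg v u (gcur g' 1) \<le> c u * (3 + \<rho> / B)"
    and "v (gcur g' 1) - sum (gp g') (gcur g' 1) \<le> \<rho>"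
    and "\<forall>u \<in> gcur g 1 \<union> gu g. gp g' u = gp g u"
    and "(gu g' = gu g \<and> bfm_stop 1 g') \<or>
         (\<exists>w. gu g' = {w} \<and> \<rho> < v (gcur g' 1) - sum (gp g') (gcur g' 1) + (v {w} - gp g' w))"
proof -
  have r: "\<rho> > 0" using a e unfolding \<rho>_def by simp
  have eq: "g' = bfm_round v c B 3 \<rho> 1 ord g" unfolding g'_def g_def \<rho>_def by simp
  have ig: "inv_g g" unfolding g_def using iter_inv[OF a e dist sN] .
  note R = round[OF ig r dist sN, folded eq]
  show "gprev g' = gcur g" by (rule R(2))
  show "gR g' \<subseteq> gR g" by (rule R(3))
  show "\<forall>u\<in>gR g - gR g'. u \<notin> gcur g' 1 \<and> marg v u (gcur g' 1) \<le> c u * (3 + \<rho> / B)" by (rule R(4))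
  show "v (gcur g' 1) - sum (gp g') (gcur g' 1) \<le> \<rho>" by (rule R(5))
  show "\<forall>u \<in> gcur g 1 \<union> gu g. gp g' u = gp g u" by (rule R(6))
  show "(gu g' = gu g \<and> bfm_stop 1 g') \<or>
         (\<exists>w. gu g' = {w} \<and> \<rho> < v (gcur g' 1) - sum (gp g') (gcur g' 1) + (v {w} - gp g' w))" by (rule R(7))
qed

lemma hist:
  assumes a: "\<alpha> \<ge> 1" and e: "\<epsilon> > 0" and dist: "distinct ord" and sN: "set ord = N"
  shows "\<forall>u \<in> gR (bfm_iter v c B \<alpha> 3 \<epsilon> 1 ord 0) - gR (bfm_iter v c B \<alpha> 3 \<epsilon> 1 ord t).
     \<exists>k<t. u \<notin> gcur (bfm_iter v c B \<alpha> 3 \<epsilon> 1 ord (Suc k)) 1 \<and>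
       marg v u (gcur (bfm_iter v c B \<alpha> 3 \<epsilon> 1 ord (Suc k)) 1) \<le> c u * (3 + \<epsilon> * \<alpha> ^ k / B)"
proof (induction t)
  case 0 then show ?case by simp
next
  case (Suc t)
  show ?case
  proof
    fix u assume u: "u \<in> gR (bfm_iter v c B \<alpha> 3 \<epsilon> 1 ord 0) - gR (bfm_iter v c B \<alpha> 3 \<epsilon> 1 ord (Suc t))"
    show "\<exists>k<Suc t. u \<notin> gcur (bfm_iter v c B \<alpha> 3 \<epsilon> 1 ord (Suc k)) 1 \<and>
       marg v u (gcur (bfm_iter v c B \<alpha> 3 \<epsilon> 1 ord (Suc k)) 1) \<le> c u * (3 + \<epsilon> * \<alpha> ^ k / B)"
    proof (cases "u \<in> gR (bfm_iter v c B \<alpha> 3 \<epsilon> 1 ord t)")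
      case True
      then show ?thesis using iter_round(3)[OF a e dist sN, of t] u by blast
    next
      case False
      then obtain k where "k < t" "u \<notin> gcur (bfm_iter v c B \<alpha> 3 \<epsilon> 1 ord (Suc k)) 1 \<and>
       marg v u (gcur (bfm_iter v c B \<alpha> 3 \<epsilon> 1 ord (Suc k)) 1) \<le> c u * (3 + \<epsilon> * \<alpha> ^ k / B)"
        using Suc u by blast
      then show ?thesis using less_SucI by blast
    qed
  qed
qed

lemma vcur:
  assumes a: "\<alpha> \<ge> 1" and e: "\<epsilon> > 0" and dist: "distinct ord" and sN: "set ord = N"
  shows "v (gcur (bfm_iter v c B \<alpha> 3 \<epsilon> 1 ord (Suc k)) 1) \<le> 3 / 2 * (\<epsilon> * \<alpha> ^ k)"
proof -
  have "v (gcur (bfm_iter v c B \<alpha> 3 \<epsilon> 1 ord (Suc k)) 1) - sum (gp (bfm_iter v c B \<alpha> 3 \<epsilon> 1 ord (Suc k))) (gcur (bfm_iter v c B \<alpha> 3 \<epsilon> 1 ord (Suc k)) 1) \<le> \<epsilon> * \<alpha> ^ k"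
    using iter_round(4)[OF a e dist sN, of k] by simp
  moreover have "sum (gp (bfm_iter v c B \<alpha> 3 \<epsilon> 1 ord (Suc k))) (gcur (bfm_iter v c B \<alpha> 3 \<epsilon> 1 ord (Suc k)) 1) \<le> v (gcur (bfm_iter v c B \<alpha> 3 \<epsilon> 1 ord (Suc k)) 1) / 3"
    using iter_inv[OF a e dist sN, of "Suc k"] unfolding inv_g_def by blast
  ultimately show ?thesis by linarith
qed

lemma main:
  assumes dist: "distinct ord" and sN: "set ord = N" and e: "\<epsilon> > 0" and OptN: "Opt \<subseteq> N"
    and cO: "sum c Opt \<le> B" and Ss: "Sstar \<in> bfm_outputs v c B \<alpha> 3 \<epsilon> 1 ord"
    and al: "\<alpha> = 1 + sqrt 6 / 2"
  shows "v Sstar - sum c Sstar \<ge> 0.0877 * v Opt - sum c Opt - \<epsilon> / 3"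
proof -
  define r where "r = sqrt 6"
  have r0: "r > 0" and r2: "r * r = 6" unfolding r_def by simp_all
  have rb: "r \<le> 2.4495" unfolding r_def by (rule real_le_lsqrt) (simp_all add: power2_eq_square)
  have a1: "\<alpha> > 1" using al r0 unfolding r_def by simp
  have a: "\<alpha> \<ge> 1" using a1 by simp
  have am1: "\<alpha> - 1 = r / 2" using al unfolding r_def by simp
  define it where "it = bfm_iter v c B \<alpha> 3 \<epsilon> 1 ord"
  note IR = iter_round[OF a e dist sN, folded it_def]
  note II = iter_inv[OF a e dist sN, folded it_def]
  have finN: "finite N" by (rule fin)
  obtain n where n: "2 * v N / \<epsilon> < \<alpha> ^ n" using real_arch_pow[OF a1] by blast
  have stopn: "bfm_stop 1 (it (Suc n))"
  proof (rule ccontr)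
    assume ns: "\<not> bfm_stop 1 (it (Suc n))"
    then obtain w where w: "gu (it (Suc n)) = {w}"
      and lt: "\<epsilon> * \<alpha> ^ n < v (gcur (it (Suc n)) 1) - sum (gp (it (Suc n))) (gcur (it (Suc n)) 1)
               + (v {w} - gp (it (Suc n)) w)"
      using IR(6)[of n] by blast
    have ig: "inv_g (it (Suc n))" by (rule II)
    then have sub1: "gcur (it (Suc n)) 1 \<subseteq> N" and wN: "w \<in> N" and pnn: "\<forall>u. 0 \<le> gp (it (Suc n)) u"
      using w unfolding inv_g_def by auto
    have "0 \<le> sum (gp (it (Suc n))) (gcur (it (Suc n)) 1)" using pnn by (simp add: sum_nonneg)
    moreover have "v (gcur (it (Suc n)) 1) \<le> v N" using monoD sub1 by simp
    moreover have "v {w} \<le> v N" using monoD wN by simp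
    moreover have "0 \<le> gp (it (Suc n)) w" using pnn by simp
    ultimately have "\<epsilon> * \<alpha> ^ n < 2 * v N" using lt by linarith
    moreover have "2 * v N < \<epsilon> * \<alpha> ^ n" using n e by (simp add: divide_less_eq mult.commute)
    ultimately show False by linarith
  qed
  have ex: "\<exists>t. 0 < t \<and> bfm_stop 1 (it t)" using stopn by blast
  define M where "M = bfm_M v c B \<alpha> 3 \<epsilon> 1 ord"
  have Mdef: "M = (LEAST t. 0 < t \<and> bfm_stop 1 (it t))" unfolding M_def bfm_M_def it_def ..
  have M: "0 < M \<and> bfm_stop 1 (it M)" unfolding Mdef by (rule LeastI_ex[OF ex])
  have Mmin: "\<not> bfm_stop 1 (it t)" if "0 < t" "t < M" for t
    using not_less_Least[of t "\<lambda>t. 0 < t \<and> bfm_stop 1 (it t)"] that unfolding Mdef by blast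
  define g where "g = it M"
  have gfin: "bfm_final v c B \<alpha> 3 \<epsilon> 1 ord = g" unfolding g_def it_def bfm_final_def M_def ..
  define W where "W = v Sstar - sum (gp g) Sstar"
  have cand: "Sstar = gprev g 1 \<or> Sstar = gcur g 1 \<or> Sstar = gu g"
    and best: "\<forall>A\<in>{gprev g 1, gcur g 1, gu g}. v A - sum (gp g) A \<le> W"
    using Ss unfolding bfm_outputs_def gfin bfm_candidates_def Let_def W_def by auto
  have ig: "inv_g g" unfolding g_def by (rule II)
  then have gRN: "gR g \<subseteq> N" and gcp: "\<forall>u\<in>gR g. c u \<le> gp g u" and gpnn: "\<forall>u. 0 \<le> gp g u"
    and gcR: "gcur g 1 \<subseteq> gR g" and gcs: "sum (gp g) (gcur g 1) \<le> v (gcur g 1) / 3"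
    and gpR: "gprev g 1 \<subseteq> gR g" and gps: "sum (gp g) (gprev g 1) \<le> v (gprev g 1) / 3"
    and gu: "gu g = {} \<or> (\<exists>w. gu g = {w} \<and> w \<in> gR g \<and> gp g w \<le> v {w} / 3)"
    unfolding inv_g_def by blast+
  have c1: "v (gprev g 1) \<le> 3 / 2 * W" using best gps by auto
  have c2: "v (gcur g 1) \<le> 3 / 2 * W" using best gcs by auto
  have "gcur g 1 \<subseteq> N" using gcR gRN by blast
  then have "0 \<le> v (gcur g 1)" by (rule vnnD)
  then have W0: "0 \<le> W" using c2 by linarith
  have guR: "gu g \<subseteq> gR g" using gu by auto
  have c3: "v (gu g) \<le> 3 / 2 * W"
  proof (cases "gu g = {}")
    case True then show ?thesis using v0 W0 by simp
  next
    case False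
    then obtain w where w: "gu g = {w}" "gp g w \<le> v {w} / 3" using gu by blast
    then show ?thesis using best by auto
  qed
  have SsR: "Sstar \<subseteq> gR g" using cand gcR gpR guR by blast
  have "sum c Sstar \<le> sum (gp g) Sstar" using SsR gcp by (intro sum_mono) auto
  then have lhs: "W \<le> v Sstar - sum c Sstar" unfolding W_def by simp
  have cOnn: "0 \<le> sum c Opt" using cnn OptN by (intro sum_nonneg) auto
  have finO: "finite Opt" using finite_subset[OF OptN finN] .
  obtain m' where Mm: "M = Suc m'" using M by (cases M) auto
  define S where "S k = gcur (it (Suc k)) 1" for k
  have SN: "S k \<subseteq> N" for k using II[of "Suc k"] unfolding S_def inv_g_def by blast
  define T where "T = (\<Union>k<M. S k) \<union> gu g"
  have TN: "T \<subseteq> N" unfolding T_def using SN guR gRN by blast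
  have gprev_eq: "gprev g 1 = gcur (it m') 1" using IR(1)[of m'] unfolding g_def Mm by simp
  have gcur_eq: "gcur g 1 = S m'" unfolding S_def g_def Mm ..
  have RT: "gR g \<subseteq> T"
  proof -
    have st: "gR g - ((gprev g 1 \<union> gcur g 1) \<union> gu g) = {}"
      using M unfolding bfm_stop_def g_def by simp
    have "gprev g 1 \<subseteq> T"
    proof (cases m')
      case 0 then show ?thesis using gprev_eq unfolding it_def by simp
    next
      case (Suc k)
      then have "k < M" using Mm by simp
      then have "S k \<subseteq> T" unfolding T_def by blast
      then show ?thesis using gprev_eq Suc unfolding S_def by simp
    qed
    moreover have "gcur g 1 \<subseteq> T" using gcur_eq Mm unfolding T_def by auto
    ultimately show ?thesis using st unfolding T_def by blast
  qed
  define D where "D = 3 + \<epsilon> * \<alpha> ^ m' / B"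
  have mb: "marg v x T \<le> c x * D" if x: "x \<in> Opt - T" for x
  proof -
    have oN: "x \<in> N" using x OptN by auto
    have "c x \<le> sum c Opt" using x finO cnn OptN by (intro member_le_sum) auto
    then have "x \<in> gR (it 0)" using oN cO sN unfolding it_def by simp
    moreover have "x \<notin> gR (it M)" using x RT unfolding g_def by auto
    ultimately obtain k where k: "k < M" "x \<notin> S k" "marg v x (S k) \<le> c x * (3 + \<epsilon> * \<alpha> ^ k / B)"
      using hist[OF a e dist sN, of M] unfolding it_def S_def by blast
    have "S k \<subseteq> T" using k(1) unfolding T_def by auto
    moreover have "x \<notin> T" using x by blast
    ultimately have "marg v x T \<le> marg v x (S k)" using subD[OF _ TN oN] by blast
    moreover have "\<alpha> ^ k \<le> \<alpha> ^ m'" using k(1) Mm a by (intro power_increasing) auto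
    then have "\<epsilon> * \<alpha> ^ k / B \<le> \<epsilon> * \<alpha> ^ m' / B" using e Bpos by (simp add: divide_right_mono)
    then have "c x * (3 + \<epsilon> * \<alpha> ^ k / B) \<le> c x * D" unfolding D_def using cnn oN
      by (intro mult_left_mono) auto
    ultimately show ?thesis using k by linarith
  qed
  have D0: "0 \<le> D" unfolding D_def using e a Bpos by simp
  have vO1: "v Opt \<le> v T + (\<Sum>x\<in>Opt - T. marg v x T)"
  proof -
    have "v Opt \<le> v (T \<union> Opt)" using monoD TN OptN by auto
    also have "\<dots> \<le> v T + (\<Sum>x\<in>Opt - T. marg v x T)" using diminishing[OF finO OptN TN] .
    finally show ?thesis .
  qed
  have sumb: "(\<Sum>x\<in>Opt - T. marg v x T) \<le> 3 * sum c Opt + \<epsilon> * \<alpha> ^ m'"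
  proof -
    have "(\<Sum>x\<in>Opt - T. marg v x T) \<le> (\<Sum>x\<in>Opt - T. c x * D)" using mb by (intro sum_mono) auto
    also have "\<dots> = sum c (Opt - T) * D" by (simp add: sum_distrib_right)
    also have "\<dots> \<le> sum c Opt * D"
      using D0 cnn OptN finO by (intro mult_right_mono sum_mono2) auto
    also have "\<dots> = 3 * sum c Opt + \<epsilon> * \<alpha> ^ m' * (sum c Opt / B)" unfolding D_def
      by (simp add: algebra_simps)
    also have "\<dots> \<le> 3 * sum c Opt + \<epsilon> * \<alpha> ^ m' * 1"
      using cO Bpos cOnn e a by (intro add_left_mono mult_left_mono) (auto simp: divide_le_eq)
    finally show ?thesis by simp
  qed
  have vT: "v T \<le> (\<Sum>k<M. v (S k)) + v (gu g)"
  proof -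
    have U: "(\<Union>k<M. S k) \<subseteq> N" using SN by blast
    have guN: "gu g \<subseteq> N" using guR gRN by blast
    have "v T \<le> v (\<Union>k<M. S k) + v (gu g)" unfolding T_def by (rule subadd[OF U guN])
    moreover have "v (\<Union>k<M. S k) \<le> (\<Sum>k<M. v (S k))" using subadd_UN[of "{..<M}" S] SN by simp
    ultimately show ?thesis by linarith
  qed
  have vO: "v Opt \<le> (\<Sum>k<M. v (S k)) + v (gu g) + 3 * sum c Opt + \<epsilon> * \<alpha> ^ m'"
    using vO1 sumb vT by linarith
  have goal: "0.0877 * v Opt - sum c Opt - \<epsilon> / 3 \<le> W"
  proof (cases m')
    case 0
    then have "(\<Sum>k<M. v (S k)) = v (gcur g 1)" using Mm gcur_eq by simp
    then have "v Opt \<le> 3 * W + 3 * sum c Opt + \<epsilon>" using vO c2 c3 0 by simp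
    then show ?thesis using W0 cOnn e unfolding power_numeral by (simp; linarith)
  next
    case (Suc m)
    have sp: "(\<Sum>k<M. v (S k)) = (\<Sum>k<m. v (S k)) + v (gprev g 1) + v (gcur g 1)"
      using Mm Suc gcur_eq gprev_eq unfolding S_def by simp
    define X where "X = \<epsilon> * \<alpha> ^ m"
    have X0: "0 \<le> X" unfolding X_def using e a by simp
    have geo: "(\<Sum>k<m. v (S k)) \<le> 3 / 2 * \<epsilon> * ((\<alpha> ^ m - 1) / (\<alpha> - 1))"
    proof -
      have "(\<Sum>k<m. v (S k)) \<le> (\<Sum>k<m. 3 / 2 * \<epsilon> * \<alpha> ^ k)"
        using vcur[OF a e dist sN] unfolding S_def it_def by (intro sum_mono) (simp add: mult.assoc)
      also have "\<dots> = 3 / 2 * \<epsilon> * (\<Sum>k<m. \<alpha> ^ k)" by (simp add: sum_distrib_left)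
      also have "\<dots> = 3 / 2 * \<epsilon> * ((\<alpha> ^ m - 1) / (\<alpha> - 1))" using a1 by (simp add: geometric_sum)
      finally show ?thesis .
    qed
    have geo2: "3 / 2 * \<epsilon> * ((\<alpha> ^ m - 1) / (\<alpha> - 1)) \<le> 3 * X / r"
    proof -
      have "\<epsilon> * (\<alpha> ^ m - 1) \<le> X" unfolding X_def using e by (simp add: algebra_simps)
      then have "3 / 2 * \<epsilon> * ((\<alpha> ^ m - 1) / (\<alpha> - 1)) = 3 * (\<epsilon> * (\<alpha> ^ m - 1)) / r"
        using am1 r0 by (simp add: field_simps)
      also have "\<dots> \<le> 3 * X / r" using \<open>\<epsilon> * (\<alpha> ^ m - 1) \<le> X\<close> r0 by (simp add: divide_right_mono)
      finally show ?thesis .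
    qed
    have XW: "X \<le> 2 * W"
    proof -
      have ns: "\<not> bfm_stop 1 (it (Suc m))" using Mmin[of "Suc m"] Mm Suc by simp
      then obtain w where w: "gu (it (Suc m)) = {w}"
        and lt: "X < v (gcur (it (Suc m)) 1) - sum (gp (it (Suc m))) (gcur (it (Suc m)) 1)
               + (v {w} - gp (it (Suc m)) w)"
        using IR(6)[of m] unfolding X_def by blast
      have gMeq: "it (Suc (Suc m)) = g" unfolding g_def Mm Suc ..
      have cs: "(gu g = gu (it (Suc m)) \<and> bfm_stop 1 g) \<or>
         (\<exists>w. gu g = {w} \<and> \<epsilon> * \<alpha> ^ Suc m < v (gcur g 1) - sum (gp g) (gcur g 1) + (v {w} - gp g w))"
        using IR(6)[of "Suc m"] unfolding gMeq .
      show ?thesis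
      proof (cases "gu g = gu (it (Suc m)) \<and> bfm_stop 1 g")
        case True
        have unch: "\<forall>u \<in> gcur (it (Suc m)) 1 \<union> gu (it (Suc m)). gp g u = gp (it (Suc m)) u"
          using IR(5)[of "Suc m"] unfolding gMeq .
        have pe: "gprev g 1 = gcur (it (Suc m)) 1" using gprev_eq Suc by simp
        have "sum (gp g) (gprev g 1) = sum (gp (it (Suc m))) (gcur (it (Suc m)) 1)"
          unfolding pe using unch by (intro sum.cong) auto
        moreover have "gp g w = gp (it (Suc m)) w" using unch w by auto
        moreover have "gu g = {w}" using True w by simp
        ultimately have "X < (v (gprev g 1) - sum (gp g) (gprev g 1)) + (v (gu g) - sum (gp g) (gu g))"
          using lt pe by simp
        then show ?thesis using best by auto
      next
        case False
        then obtain w' where w': "gu g = {w'}"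
          and lt': "\<epsilon> * \<alpha> ^ Suc m < v (gcur g 1) - sum (gp g) (gcur g 1) + (v {w'} - gp g w')"
          using cs by blast
        have "X \<le> \<epsilon> * \<alpha> ^ Suc m" unfolding X_def using e a by simp
        then have "X < (v (gcur g 1) - sum (gp g) (gcur g 1)) + (v (gu g) - sum (gp g) (gu g))"
          using lt' w' by simp
        then show ?thesis using best by auto
      qed
    qed
    have t1: "3 * X / r \<le> r * W"
    proof -
      have "3 * X \<le> (r * r) * W" using XW r2 by simp
      then show ?thesis using r0 by (simp add: divide_le_eq mult.commute mult.left_commute)
    qed
    have t2: "\<epsilon> * \<alpha> ^ m' = \<alpha> * X" unfolding X_def Suc by simp
    have t3: "\<alpha> * X \<le> \<alpha> * (2 * W)" using XW a by (intro mult_left_mono) auto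
    have t4: "\<alpha> * (2 * W) = 2 * W + r * W" using al unfolding r_def by (simp add: algebra_simps)
    have t5: "r * W \<le> 2.4495 * W" using rb W0 by (intro mult_right_mono) auto
    have "v Opt \<le> 4.5 * W + r * W + (2 * W + r * W) + 3 * sum c Opt"
      using vO sp geo geo2 t1 t2 t3 t4 c1 c2 c3 by linarith
    then show ?thesis using t5 W0 cOnn e unfolding power_numeral by (simp; linarith)
  qed
  show ?thesis using goal lhs by linarith
qed

end

theorem theorem4p10:
  fixes v :: "'a set \<Rightarrow> real" and c :: "'a \<Rightarrow> real" and ord :: "'a list"
    and B \<epsilon> :: real and Opt Sstar :: "'a set"
  defines "N \<equiv> set ord"
  assumes "distinct ord"
    and "v {} = 0"
    and "\<forall>X\<subseteq>N. 0 \<le> v X"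
    and "monotone_on_sets N v"
    and "submodular_on N v"
    and "\<forall>u\<in>N. 0 \<le> c u"
    and "B > 0" and "\<epsilon> > 0"
    and "Opt \<subseteq> N" and "sum c Opt \<le> B"
    and "\<forall>S\<subseteq>N. sum c S \<le> B \<longrightarrow> v S - sum c S \<le> v Opt - sum c Opt"
    and "Sstar \<in> bfm_outputs v c B (1 + sqrt 6 / 2) 3 \<epsilon> 1 ord"
  shows "v Sstar - sum c Sstar \<ge> 0.0877 * v Opt - sum c Opt - \<epsilon> / 3"
proof -
  have sN: "set ord = N" unfolding N_def ..
  have finN: "finite N" unfolding N_def by simp
  interpret bfm v c N B
    using finN assms(3-8) by unfold_locales auto
  show ?thesis
    by (rule main[OF assms(2) sN assms(9) assms(10) assms(11) assms(13)]) simp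
qed

end
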